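(* Let $p,q$ be positive integers with $p/q\ge4$, $k=\lfloor p/q\rfloor$, $r=p-kq\ge1$, and $t$ the smallest positive integer with $(t+1)q\equiv r\pmod p$. Let $G$ be a graph and $f,g$ two $k$-colourings of $G$ with colours $\{0,\dots,k-1\}$, and let $(G',\alpha,\beta)$ be constructed from $(G,f,g)$ as described in the context. If $\alpha$ reconfigures to $\beta$ (as $(p,q)$-colourings of $G'$), then $f$ reconfigures to $g$ (as $k$-colourings of $G$).
   Context: Intervals $[a,b]=\{a,a+1,\dots,b\}$ are taken modulo $p$. A $(p,q)$-colouring is a map to $\{0,\dots,p-1\}$ with $q\le|\psi(x)-\psi(y)|\le p-q$ on every edge; a $k$-colouring is a proper colouring with colours $\{0,\dots,k-1\}$; in either setting, $a$ reconfigures to $b$ if there is a sequence of such colourings from $a$ to $b$ with consecutive ones differing on at most one vertex. Let $\gamma(0)=0$ and $\gamma(i)=iq+r$ for $1\le i\le k-1$. Construction of $G'$: start from $G$; add a disjoint copy of the circular clique on vertices $y_0,\dots,y_{p-1}$ ($y_iy_j$ an edge iff $q\le|i-j|\le p-q$); for every edge $uv$ of $G$ add two new paths $P_{uv}=u\,x_0^{uv}\cdots x_t^{uv}\,v$ and $P_{vu}=v\,x_0^{vu}\cdots x_t^{vu}\,u$, internally disjoint from everything else and each other; join $x_0^{ab}$ and $x_t^{ab}$ to all $y_j$ with $j\in[3q-1,p-q-1]$, and join $x_i^{ab}$ ($1\le i\le t-1$) to all $y_j$ with $j\in[(i+3)q-1,(i-1)q]$. Colouring $\alpha$: $\alpha(w)=\gamma(f(w))$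 for $w\in V(G)$; $\alpha(y_i)=i$; for each path $P_{ab}$ (over both orderings of each edge of $G$): if $\alpha(a)=0$, set $\alpha(x_i^{ab})=(i+1)q\bmod p$ for $0\le i\le t$; if $\alpha(b)=0$, set $\alpha(x_i^{ab})=iq\bmod p$ for $0\le i\le t-1$ and $\alpha(x_t^{ab})=q$; if $\alpha(a)\ne0\ne\alpha(b)$, set $\alpha(x_i^{ab})=iq\bmod p$ for $0\le i\le t-1$ and $\alpha(x_t^{ab})=0$. The colouring $\beta$ is defined in the same way from $g$. *)

theory Defs
  imports Main
begin

definition graph :: "'v set \<Rightarrow> ('v \<Rightarrow> 'v \<Rightarrow> bool) \<Rightarrow> bool" where
  "graph V E \<longleftrightarrow> finite V \<and> (\<forall>u v. E u v \<longrightarrow> u \<in> V \<and> v \<in> V)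
     \<and> (\<forall>u v. E u v \<longrightarrow> E v u) \<and> (\<forall>v. \<not> E v v)"

definition k_col :: "nat \<Rightarrow> 'v set \<Rightarrow> ('v \<Rightarrow> 'v \<Rightarrow> bool) \<Rightarrow> ('v \<Rightarrow> nat) \<Rightarrow> bool" where
  "k_col k V E c \<longleftrightarrow> (\<forall>v\<in>V. c v < k) \<and> (\<forall>u\<in>V. \<forall>v\<in>V. E u v \<longrightarrow> c u \<noteq> c v)"

definition pq_col :: "nat \<Rightarrow> nat \<Rightarrow> 'v set \<Rightarrow> ('v \<Rightarrow> 'v \<Rightarrow> bool) \<Rightarrow> ('v \<Rightarrow> nat) \<Rightarrow> bool" where
  "pq_col p q V E c \<longleftrightarrow> (\<forall>v\<in>V. c v < p) \<and>
     (\<forall>u\<in>V. \<forall>v\<in>V. E u v \<longrightarrow>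
        int q \<le> \<bar>int (c u) - int (c v)\<bar> \<and> \<bar>int (c u) - int (c v)\<bar> \<le> int p - int q)"

definition reconf_step :: "(('v \<Rightarrow> nat) \<Rightarrow> bool) \<Rightarrow> 'v set \<Rightarrow> ('v \<Rightarrow> nat) \<Rightarrow> ('v \<Rightarrow> nat) \<Rightarrow> bool" where
  "reconf_step P V c d \<longleftrightarrow> P c \<and> P d \<and> (\<exists>w. \<forall>v\<in>V. v \<noteq> w \<longrightarrow> c v = d v)"

definition reconfigures :: "(('v \<Rightarrow> nat) \<Rightarrow> bool) \<Rightarrow> 'v set \<Rightarrow> ('v \<Rightarrow> nat) \<Rightarrow> ('v \<Rightarrow> nat) \<Rightarrow> bool" where
  "reconfigures P V a b \<longleftrightarrow> P a \<and> P b \<and> (reconf_step P V)\<^sup>*\<^sup>* a b"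

text \<open>Cyclic interval [a,b] = {a, a+1, ..., b} modulo p, as a subset of {0..p-1}.\<close>
definition cint :: "nat \<Rightarrow> int \<Rightarrow> int \<Rightarrow> nat set" where
  "cint p a b = {j. j < p \<and> (int j - a) mod int p \<le> (b - a) mod int p}"

definition gamma :: "nat \<Rightarrow> nat \<Rightarrow> nat \<Rightarrow> nat" where
  "gamma q r i = (if i = 0 then 0 else i * q + r)"

text \<open>Vertices of G': original vertices, clique vertices y_i, and path vertices
  x_i^{ab} (X a b i) of the path P_ab.\<close>
datatype 'v gvert = Orig 'v | Yv nat | Xv 'v 'v nat

definition Gp_V :: "nat \<Rightarrow> nat \<Rightarrow> 'v set \<Rightarrow> ('v \<Rightarrow> 'v \<Rightarrow> bool) \<Rightarrow> 'v gvert set" where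
  "Gp_V p t V E = Orig ` V \<union> Yv ` {..<p} \<union> {Xv a b i | a b i. E a b \<and> i \<le> t}"

fun Gp_base :: "nat \<Rightarrow> nat \<Rightarrow> nat \<Rightarrow> ('v \<Rightarrow> 'v \<Rightarrow> bool) \<Rightarrow> 'v gvert \<Rightarrow> 'v gvert \<Rightarrow> bool" where
  "Gp_base p q t E (Orig u) (Orig v) = E u v"
| "Gp_base p q t E (Yv i) (Yv j) = (i < p \<and> j < p \<and>
      int q \<le> \<bar>int i - int j\<bar> \<and> \<bar>int i - int j\<bar> \<le> int p - int q)"
| "Gp_base p q t E (Orig u) (Xv a b i) = (E a b \<and> ((u = a \<and> i = 0) \<or> (u = b \<and> i = t)))"
| "Gp_base p q t E (Xv a b i) (Xv a' b' i') = (E a b \<and> a' = a \<and> b' = b \<and> i < t \<and> i' = i + 1)"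
| "Gp_base p q t E (Xv a b i) (Yv j) = (E a b \<and> i \<le> t \<and> j < p \<and>
      (if i = 0 \<or> i = t then j \<in> cint p (3 * int q - 1) (int p - int q - 1)
       else j \<in> cint p ((int i + 3) * int q - 1) ((int i - 1) * int q)))"
| "Gp_base p q t E _ _ = False"

definition Gp_E :: "nat \<Rightarrow> nat \<Rightarrow> nat \<Rightarrow> ('v \<Rightarrow> 'v \<Rightarrow> bool) \<Rightarrow> 'v gvert \<Rightarrow> 'v gvert \<Rightarrow> bool" where
  "Gp_E p q t E x y \<longleftrightarrow> Gp_base p q t E x y \<or> Gp_base p q t E y x"

text \<open>The colouring alpha (resp. beta) of G' built from a colouring c = gamma o f.\<close>
fun Gp_col :: "nat \<Rightarrow> nat \<Rightarrow> nat \<Rightarrow> ('v \<Rightarrow> nat) \<Rightarrow> 'v gvert \<Rightarrow> nat" where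
  "Gp_col p q t c (Orig v) = c v"
| "Gp_col p q t c (Yv i) = i"
| "Gp_col p q t c (Xv a b i) =
     (if c a = 0 then ((i + 1) * q) mod p
      else if c b = 0 then (if i < t then (i * q) mod p else q)
      else (if i < t then (i * q) mod p else 0))"

end

theory Submission imports Defs begin

lemma near:
  fixes u v p q :: nat and d :: int
  assumes "u < p" "v < p" "(int u - int v) mod int p = d mod int p" "\<bar>d\<bar> < int q"
    "int q \<le> \<bar>int u - int v\<bar>" "\<bar>int u - int v\<bar> \<le> int p - int q"
  shows False
proof -
  have "int p dvd ((int u - int v) - d)" using assms(3) by (simp add: mod_eq_dvd_iff)
  then obtain m where m: "(int u - int v) - d = int p * m" by (auto elim: dvdE)
  have "m = 0 \<or> m = 1 \<or> m = -1 \<or> m \<ge> 2 \<or> m \<le> -2" by linarith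
  moreover have "m \<ge> 2 \<Longrightarrow> False"
  proof -
    assume "m \<ge> 2" then have "int p * m \<ge> int p * 2" by (simp add: mult_left_mono)
    then show False using m assms by linarith
  qed
  moreover have "m \<le> -2 \<Longrightarrow> False"
  proof -
    assume "m \<le> -2" then have "int p * (-m) \<ge> int p * 2" using mult_left_mono[of 2 "-m" "int p"] by simp
    then show False using m assms by linarith
  qed
  ultimately show False using m assms by auto
qed

lemma window:
  fixes p q c :: nat and b lo hi :: int
  assumes "0 < q" "2 * q \<le> p" "0 \<le> lo" "lo \<le> hi" "hi < int p" "c < p"
    and ok: "\<forall>j\<in>cint p (b+lo) (b+hi). int q \<le> \<bar>int c - int j\<bar> \<and> \<bar>int c - int j\<bar> \<le> int p - int q"
  shows "(int c - b) mod int p \<le> lo - int q \<or> (int c - b) mod int p \<ge> hi + int q"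
proof (rule ccontr)
  assume nc: "\<not> ?thesis"
  define s where "s = (int c - b) mod int p"
  define oo where "oo = max lo (min hi s)"
  define j where "j = nat ((b + oo) mod int p)"
  have pp: "int p > 0" using assms by simp
  have j: "int j = (b + oo) mod int p" unfolding j_def using pp by simp
  have jp: "j < p" using j pp by (metis Euclidean_Rings.pos_mod_bound of_nat_less_iff)
  have o1: "lo \<le> oo" "oo \<le> hi" unfolding oo_def using assms by auto
  have "(int j - (b + lo)) mod int p = (oo - lo) mod int p"
    unfolding j by (metis add_diff_cancel_left mod_diff_left_eq)
  also have "\<dots> = oo - lo" using o1 assms by (simp add: mod_pos_pos_trivial)
  finally have "(int j - (b + lo)) mod int p \<le> (b + hi - (b + lo)) mod int p"
    using o1 assms by (simp add: mod_pos_pos_trivial)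
  then have "j \<in> cint p (b+lo) (b+hi)" using jp unfolding cint_def by simp
  with ok have k: "int q \<le> \<bar>int c - int j\<bar>" "\<bar>int c - int j\<bar> \<le> int p - int q" by auto
  have "(int c - int j) mod int p = (s - oo) mod int p"
    unfolding j s_def by (metis diff_diff_eq mod_diff_eq mod_diff_left_eq)
  moreover have "\<bar>s - oo\<bar> < int q" using nc assms(1) unfolding oo_def s_def by (auto simp: max_def min_def abs_if)
  ultimately show False using near[OF \<open>c<p\<close> jp _ _ k] by blast
qed


lemma mod_shift: fixes x n p :: int assumes "0 \<le> x + n*p" "x + n*p < p" shows "x mod p = x + n*p"
  using assms by (metis mod_mult_self1 mod_pos_pos_trivial)

lemma cint_shift: "cint p a (b + int p) = cint p a b"
proof -
  have "(b + int p - a) mod int p = (b - a) mod int p"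
    by (metis add.commute add_diff_eq mod_add_self1)
  thus ?thesis unfolding cint_def by simp
qed

lemma ok_sym: "(\<bar>int x - int y\<bar> :: int) = \<bar>int y - int x\<bar>" by linarith

lemma cint_dist:
  fixes i j p q :: nat
  assumes "j < p" "i < p" "0 < q" "2*q \<le> p" "(int j - (int i + int q)) mod int p \<le> int p - 2*int q"
  shows "int q \<le> \<bar>int j - int i\<bar> \<and> \<bar>int j - int i\<bar> \<le> int p - int q"
proof -
  define x where "x = int j - (int i + int q)"
  have m: "x mod int p \<le> int p - 2*int q" using assms(5) unfolding x_def .
  consider "x \<ge> 0" | "x < 0 \<and> x \<ge> - int p" | "x < - int p" by linarith
  thus ?thesis
  proof cases
    case 1
    have "x mod int p = x + 0 * int p" using 1 assms by (intro mod_shift) (auto simp: x_def)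
    thus ?thesis using m 1 unfolding x_def by auto
  next
    case 2
    have "x mod int p = x + 1 * int p" using 2 assms by (intro mod_shift) (auto simp: x_def)
    thus ?thesis using m 2 unfolding x_def by auto
  next
    case 3
    have "x mod int p = x + 2 * int p" using 3 assms by (intro mod_shift) (auto simp: x_def)
    thus ?thesis using m 3 assms unfolding x_def by auto
  qed
qed

lemma near2:
  fixes u v p q :: nat and d M :: int
  assumes "u < p" "v < p" "int u - int v = d + int p * M" "\<bar>d\<bar> < int q"
    "int q \<le> \<bar>int u - int v\<bar> \<and> \<bar>int u - int v\<bar> \<le> int p - int q"
  shows False
proof -
  have "(int u - int v) mod int p = d mod int p" using assms(3) by simp
  thus False using near[OF assms(1,2) _ assms(4)] assms(5) by blast
qed

locale Setup =
  fixes p q k r t :: nat and V :: "'v set" and E :: "'v \<Rightarrow> 'v \<Rightarrow> bool"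
  assumes q0: "0 < q" and pq: "4 * q \<le> p" and rq: "r < q" and r1: "1 \<le> r"
    and tq: "((t+1)*q) mod p = r" and t0: "0 < t"
    and gr: "graph V E" and kdef: "k = p div q" and rdef: "r = p - k * q"
begin

abbreviation "VG \<equiv> Gp_V p t V E"
abbreviation "EG \<equiv> Gp_E p q t E"
abbreviation "PP \<equiv> pq_col p q VG EG"

lemma okE:
  assumes "PP \<phi>" "x \<in> VG" "y \<in> VG" "EG x y"
  shows "int q \<le> \<bar>int (\<phi> x) - int (\<phi> y)\<bar> \<and> \<bar>int (\<phi> x) - int (\<phi> y)\<bar> \<le> int p - int q"
  using assms unfolding pq_col_def by blast

lemma ltp: "PP \<phi> \<Longrightarrow> x \<in> VG \<Longrightarrow> \<phi> x < p"
  unfolding pq_col_def by blast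

lemma Y_step:
  assumes P1: "PP \<phi>" and P2: "PP \<psi>" and eq: "\<forall>v\<in>VG. v \<noteq> w \<longrightarrow> \<phi> v = \<psi> v"
    and Y: "\<forall>j<p. \<phi> (Yv j) = j"
  shows "\<forall>j<p. \<psi> (Yv j) = j"
proof (intro allI impI)
  fix i assume ip: "i < p"
  have YV: "Yv j \<in> VG" if "j < p" for j using that unfolding Gp_V_def by auto
  show "\<psi> (Yv i) = i"
  proof (cases "w = Yv i")
    case False thus ?thesis using eq Y YV[OF ip] ip by auto
  next
    case True
    define c where "c = \<psi> (Yv i)"
    have cp: "c < p" unfolding c_def using ltp[OF P2 YV[OF ip]] .
    have ok: "\<forall>j\<in>cint p (int i + int q) (int i + (int p - int q)).
        int q \<le> \<bar>int c - int j\<bar> \<and> \<bar>int c - int j\<bar> \<le> int p - int q"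
    proof
      fix j assume j: "j \<in> cint p (int i + int q) (int i + (int p - int q))"
      have jp: "j < p" and jm: "(int j - (int i + int q)) mod int p \<le> (int p - int q - int q) mod int p"
        using j unfolding cint_def by (auto simp: algebra_simps)
      have pp: "(int p - int q - int q) mod int p = int p - 2 * int q"
        using pq q0 by (subst mod_pos_pos_trivial) auto
      define d where "d = int j - int i"
      have dj: "int q \<le> \<bar>d\<bar> \<and> \<bar>d\<bar> \<le> int p - int q"
        using cint_dist[OF jp ip q0 _ jm[unfolded pp]] pq unfolding d_def by auto
      have jne: "j \<noteq> i" using dj q0 unfolding d_def by auto
      have sw: "\<bar>int i - int j\<bar> = \<bar>d\<bar>" unfolding d_def by linarith
      have "Gp_base p q t E (Yv i) (Yv j)" using dj jp ip sw by simp
      then have "EG (Yv i) (Yv j)" unfolding Gp_E_def by simp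
      from okE[OF P2 YV[OF ip] YV[OF jp] this]
      have "int q \<le> \<bar>int c - int (\<psi> (Yv j))\<bar> \<and> \<bar>int c - int (\<psi> (Yv j))\<bar> \<le> int p - int q"
        unfolding c_def .
      moreover have "\<psi> (Yv j) = j" using eq Y YV[OF jp] True jne jp by auto
      ultimately show "int q \<le> \<bar>int c - int j\<bar> \<and> \<bar>int c - int j\<bar> \<le> int p - int q" by simp
    qed
    have "(int c - int i) mod int p \<le> int q - int q \<or> (int c - int i) mod int p \<ge> (int p - int q) + int q"
      by (rule window[OF q0 _ _ _ _ cp ok]) (use pq ip q0 in auto)
    moreover have "0 \<le> (int c - int i) mod int p" "(int c - int i) mod int p < int p" using ip by simp_all
    ultimately have z: "(int c - int i) mod int p = 0" using q0 by linarith
    have "int c = int i"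
    proof (cases "int c \<ge> int i")
      case True
      have "(int c - int i) mod int p = (int c - int i) + 0 * int p" using True cp by (intro mod_shift) auto
      thus ?thesis using z by simp
    next
      case False
      have "(int c - int i) mod int p = (int c - int i) + 1 * int p" using False ip by (intro mod_shift) auto
      thus ?thesis using z ip by simp
    qed
    thus ?thesis unfolding c_def by simp
  qed
qed


lemma path_contra:
  assumes P: "PP \<phi>" and Y: "\<forall>j<p. \<phi> (Yv j) = j" and ab: "E a b"
    and AB: "\<phi> (Orig a) + q \<le> \<phi> (Orig b)" "\<phi> (Orig b) < q + r"
  shows False
proof -
  have aV: "a \<in> V" and bV: "b \<in> V" using gr ab unfolding graph_def by auto
  have OV: "Orig a \<in> VG" "Orig b \<in> VG" using aV bV unfolding Gp_V_def by auto
  have XV: "Xv a b i \<in> VG" if "i \<le> t" for i using that ab unfolding Gp_V_def by auto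
  have YV: "Yv j \<in> VG" if "j < p" for j using that unfolding Gp_V_def by auto
  define c where "c i = \<phi> (Xv a b i)" for i
  define A where "A = \<phi> (Orig a)"
  define B where "B = \<phi> (Orig b)"
  have cp: "c i < p" if "i \<le> t" for i using ltp[OF P XV[OF that]] unfolding c_def .
  have Ap: "A < p" "B < p" using ltp[OF P OV(1)] ltp[OF P OV(2)] unfolding A_def B_def by auto
  have Ar: "A < r" using AB unfolding A_def by auto
  have okX: "int q \<le> \<bar>int (c i) - int j\<bar> \<and> \<bar>int (c i) - int j\<bar> \<le> int p - int q"
    if "i \<le> t" "j < p" "Gp_base p q t E (Xv a b i) (Yv j)" for i j
  proof -
    have "EG (Xv a b i) (Yv j)" unfolding Gp_E_def using that by auto
    from okE[OF P XV[OF that(1)] YV[OF that(2)] this] show ?thesis using Y that unfolding c_def by auto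
  qed
  have winE: "c i \<le> 2*q - 1 \<or> c i = p - 1" if "i = 0 \<or> i = t" for i
  proof -
    have it: "i \<le> t" using that by auto
    have ok: "\<forall>j\<in>cint p (0 + (3 * int q - 1)) (0 + (int p - int q - 1)).
        int q \<le> \<bar>int (c i) - int j\<bar> \<and> \<bar>int (c i) - int j\<bar> \<le> int p - int q"
    proof
      fix j assume j: "j \<in> cint p (0 + (3 * int q - 1)) (0 + (int p - int q - 1))"
      have "j < p" using j unfolding cint_def by auto
      thus "int q \<le> \<bar>int (c i) - int j\<bar> \<and> \<bar>int (c i) - int j\<bar> \<le> int p - int q"
        using okX[OF it] j ab that it by auto
    qed
    have "(int (c i) - 0) mod int p \<le> (3 * int q - 1) - int q \<or> (int (c i) - 0) mod int p \<ge> (int p - int q - 1) + int q"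
      by (rule window[OF q0 _ _ _ _ cp[OF it] ok]) (use pq q0 in auto)
    moreover have "(int (c i) - 0) mod int p = int (c i)" using cp[OF it] by simp
    ultimately show ?thesis using cp[OF it] by auto
  qed
  define s where "s i = (int (c i) - int i * int q) mod int p" for i
  define M where "M i = (int (c i) - int i * int q) div int p" for i
  have crep: "int (c i) = int i * int q + s i + int p * M i" for i
    unfolding s_def M_def by (metis add.commute diff_add_cancel mult_div_mod_eq add.assoc)
  have s0: "s i \<ge> 0" for i unfolding s_def using pq q0 by simp
  have winM: "s i \<le> 2 * int q - 1" if "0 < i" "i < t" for i
  proof -
    have it: "i \<le> t" using that by auto
    have ceq: "cint p (int i * int q + (3 * int q - 1)) (int i * int q + (int p - int q))
             = cint p ((int i + 3) * int q - 1) ((int i - 1) * int q)"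
    proof -
      have e1: "(int i + 3) * int q - 1 = int i * int q + (3*int q - 1)" by (simp add: algebra_simps)
      have e2: "int i * int q + (int p - int q) = (int i - 1) * int q + int p" by (simp add: algebra_simps)
      show ?thesis unfolding e1 e2 cint_shift ..
    qed
    have ok: "\<forall>j\<in>cint p (int i * int q + (3 * int q - 1)) (int i * int q + (int p - int q)).
        int q \<le> \<bar>int (c i) - int j\<bar> \<and> \<bar>int (c i) - int j\<bar> \<le> int p - int q"
    proof
      fix j assume j: "j \<in> cint p (int i * int q + (3 * int q - 1)) (int i * int q + (int p - int q))"
      have "j < p" using j unfolding cint_def by auto
      thus "int q \<le> \<bar>int (c i) - int j\<bar> \<and> \<bar>int (c i) - int j\<bar> \<le> int p - int q"
        using okX[OF it] j ab that it ceq by auto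
    qed
    have "(int (c i) - int i * int q) mod int p \<le> (3 * int q - 1) - int q \<or> (int (c i) - int i * int q) mod int p \<ge> (int p - int q) + int q"
      by (rule window[OF q0 _ _ _ _ cp[OF it] ok]) (use pq q0 in auto)
    moreover have "(int (c i) - int i * int q) mod int p < int p" using pq q0 by simp
    ultimately show ?thesis unfolding s_def by auto
  qed
  have okA: "int q \<le> \<bar>int A - int (c 0)\<bar> \<and> \<bar>int A - int (c 0)\<bar> \<le> int p - int q"
  proof -
    have "EG (Orig a) (Xv a b 0)" unfolding Gp_E_def using ab by auto
    from okE[OF P OV(1) XV this] show ?thesis unfolding A_def c_def by simp
  qed
  have okB: "int q \<le> \<bar>int B - int (c t)\<bar> \<and> \<bar>int B - int (c t)\<bar> \<le> int p - int q"
  proof -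
    have "EG (Orig b) (Xv a b t)" unfolding Gp_E_def using ab by auto
    from okE[OF P OV(2) XV this] show ?thesis unfolding B_def c_def by simp
  qed
  have okS: "int q \<le> \<bar>int (c (Suc i)) - int (c i)\<bar> \<and> \<bar>int (c (Suc i)) - int (c i)\<bar> \<le> int p - int q"
    if "i < t" for i
  proof -
    have "EG (Xv a b (Suc i)) (Xv a b i)" unfolding Gp_E_def using ab that by auto
    from okE[OF P XV XV this] that show ?thesis unfolding c_def by auto
  qed
  have claim: "int A + int q \<le> s i \<and> s i \<le> 2 * int q - 1" if "i \<le> t - 1" for i
    using that
  proof (induction i)
    case 0
    have c0: "c 0 \<le> 2*q - 1"
    proof (rule ccontr)
      assume "\<not> c 0 \<le> 2*q - 1"
      then have "c 0 = p - 1" using winE by auto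
      then have "int A - int (c 0) = (int A + 1) + int p * (-1)" using pq q0 by auto
      from near2[OF Ap(1) cp this _ okA] Ar rq show False by auto
    qed
    have "s 0 = int (c 0)" unfolding s_def using cp[of 0] by simp
    moreover have "int A + int q \<le> int (c 0)" using okA Ar rq c0 by auto
    ultimately show ?case using c0 q0 by auto
  next
    case (Suc i)
    have IH: "int A + int q \<le> s i \<and> s i \<le> 2 * int q - 1" using Suc by auto
    have m: "s (Suc i) \<le> 2 * int q - 1" using winM[of "Suc i"] Suc.prems t0 by auto
    have "s i \<le> s (Suc i)"
    proof (rule ccontr)
      assume nl: "\<not> s i \<le> s (Suc i)"
      have "int (c (Suc i)) - int (c i) = (int q + s (Suc i) - s i) + int p * (M (Suc i) - M i)"
        using crep[of i] crep[of "Suc i"] by (simp add: algebra_simps)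
      moreover have "\<bar>int q + s (Suc i) - s i\<bar> < int q" using nl IH s0[of "Suc i"] by linarith
      moreover have "Suc i \<le> t" "i \<le> t" "i < t" using Suc.prems t0 by auto
      ultimately show False using near2[OF cp cp _ _ okS] by blast
    qed
    thus ?case using IH m by auto
  qed
  define u where "u = t - 1"
  have tu: "t = Suc u" using t0 unfolding u_def by auto
  have su: "int A + int q \<le> s u \<and> s u \<le> 2 * int q - 1" using claim[of u] unfolding u_def by auto
  define m' where "m' = int ((t+1)*q) div int p"
  have tq': "int ((t+1)*q) = int r + int p * m'" unfolding m'_def
    using tq by (metis mult_div_mod_eq add.commute of_nat_mod)
  have cu: "int (c u) = int r - 2 * int q + s u + int p * (M u + m')"
    using crep[of u] tq' unfolding tu by (simp add: algebra_simps)
  have okL: "int q \<le> \<bar>int (c t) - int (c u)\<bar> \<and> \<bar>int (c t) - int (c u)\<bar> \<le> int p - int q"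
    using okS[of u] tu by simp
  have ct: "c t \<le> 2*q - 1"
  proof (rule ccontr)
    assume "\<not> c t \<le> 2*q - 1"
    then have "c t = p - 1" using winE by auto
    then have e: "int (c t) - int (c u) = (2 * int q - 1 - int r - s u) + int p * (1 - M u - m')"
      using cu pq q0 by (simp add: algebra_simps)
    have d: "\<bar>2 * int q - 1 - int r - s u\<bar> < int q" using su rq by linarith
    show False using near2[OF cp[of t] cp[of u] e d okL] tu by simp
  qed
  have ct2: "int r - int q + s u \<le> int (c t)"
  proof (rule ccontr)
    assume nl: "\<not> ?thesis"
    have e: "int (c t) - int (c u) = (int (c t) - int r + 2 * int q - s u) + int p * (- M u - m')"
      using cu by (simp add: algebra_simps)
    have d: "\<bar>int (c t) - int r + 2 * int q - s u\<bar> < int q" using su rq nl ct q0 by linarith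
    show False using near2[OF cp[of t] cp[of u] e d okL] tu by simp
  qed
  have b1: "int B < int q + int r" using AB(2) unfolding B_def by linarith
  have b2: "int (c t) \<le> 2 * int q - 1" using ct q0 by linarith
  have b3: "int A + int q \<le> int B" using AB(1) unfolding A_def B_def by linarith
  have b4: "int A \<ge> 0" by simp
  show False using okB b1 b2 b3 b4 ct2 su by linarith
qed


definition hh :: "nat \<Rightarrow> nat" where "hh c = (if c < q + r then 0 else (c - r) div q)"

lemma pkq: "p = k * q + r" using rdef kdef by (metis div_times_less_eq_dividend le_add_diff_inverse)

lemma k0: "0 < k"
proof (rule ccontr)
  assume "\<not> 0 < k" then have "p = r" using pkq by simp
  thus False using rq pq q0 by linarith
qed

lemma hh_lt: "c < p \<Longrightarrow> hh c < k"
proof -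
  assume cp: "c < p"
  show "hh c < k"
  proof (cases "c < q + r")
    case True thus ?thesis using k0 unfolding hh_def by simp
  next
    case False
    have "c - r < k * q" using cp pkq False by linarith
    hence "(c - r) div q < k" by (rule less_mult_imp_div_less)
    thus ?thesis using False unfolding hh_def by simp
  qed
qed

lemma hh_gamma: "i < k \<Longrightarrow> hh (gamma q r i) = i"
proof -
  assume "i < k"
  show ?thesis
  proof (cases "i = 0")
    case True thus ?thesis unfolding hh_def gamma_def using q0 by simp
  next
    case False
    have "\<not> i * q + r < q + r" using False q0 by simp
    moreover have "(i * q + r - r) div q = i" using q0 by simp
    ultimately show ?thesis unfolding hh_def gamma_def using False by simp
  qed
qed

lemma div_eq_close: fixes x y :: nat assumes "x div q = y div q" shows "x < y + q"
proof -
  have "x = q * (x div q) + x mod q" by simp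
  moreover have "x mod q < q" using q0 by simp
  moreover have "q * (y div q) \<le> y" by (metis div_times_less_eq_dividend mult.commute)
  moreover have "q * (x div q) = q * (y div q)" using assms by simp
  ultimately show ?thesis by linarith
qed

abbreviation "mm \<phi> \<equiv> (\<lambda>v. hh (\<phi> (Orig v)))"

lemma kcol_m:
  assumes P: "PP \<phi>" and Y: "\<forall>j<p. \<phi> (Yv j) = j"
  shows "k_col k V E (mm \<phi>)"
  unfolding k_col_def
proof (intro conjI ballI impI)
  fix v assume "v \<in> V"
  hence "Orig v \<in> VG" unfolding Gp_V_def by auto
  thus "hh (\<phi> (Orig v)) < k" using hh_lt ltp[OF P] by blast
next
  fix u v assume uV: "u \<in> V" and vV: "v \<in> V" and e: "E u v"
  have OV: "Orig u \<in> VG" "Orig v \<in> VG" using uV vV unfolding Gp_V_def by auto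
  have "EG (Orig u) (Orig v)" unfolding Gp_E_def using e by simp
  from okE[OF P OV this] have ok: "int q \<le> \<bar>int (\<phi> (Orig u)) - int (\<phi> (Orig v))\<bar>" by simp
  define A where "A = \<phi> (Orig u)"
  define B where "B = \<phi> (Orig v)"
  have ok': "int q \<le> \<bar>int A - int B\<bar>" using ok unfolding A_def B_def .
  have evu: "E v u" using gr e unfolding graph_def by blast
  show "hh (\<phi> (Orig u)) \<noteq> hh (\<phi> (Orig v))"
  proof
    assume heq: "hh (\<phi> (Orig u)) = hh (\<phi> (Orig v))"
    hence heq': "hh A = hh B" unfolding A_def B_def .
    consider "A < q + r" "B < q + r" | "A < q + r" "\<not> B < q + r" | "\<not> A < q + r" "B < q + r"
      | "\<not> A < q + r" "\<not> B < q + r" by blast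
    thus False
    proof cases
      case 1
      show False
      proof (cases "A < B")
        case True
        hence "A + q \<le> B" using ok' by linarith
        thus False using path_contra[OF P Y e] 1 unfolding A_def B_def by blast
      next
        case False
        hence "B + q \<le> A" using ok' by linarith
        thus False using path_contra[OF P Y evu] 1 unfolding A_def B_def by blast
      qed
    next
      case 2
      have "q \<le> B - r" using 2 by linarith
      hence "q div q \<le> (B - r) div q" by (rule div_le_mono)
      hence "(B - r) div q \<noteq> 0" using q0 by simp
      thus False using heq' 2 unfolding hh_def by simp
    next
      case 3
      have "q \<le> A - r" using 3 by linarith
      hence "q div q \<le> (A - r) div q" by (rule div_le_mono)
      hence "(A - r) div q \<noteq> 0" using q0 by simp
      thus False using heq' 3 unfolding hh_def by simp
    next
      case 4
      have "(A - r) div q = (B - r) div q" using heq' 4 unfolding hh_def by simp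
      hence "A - r < B - r + q" "B - r < A - r + q" using div_eq_close by metis+
      thus False using ok' 4 by linarith
    qed
  qed
qed

lemma chain:
  assumes "(reconf_step PP VG)\<^sup>*\<^sup>* \<alpha> \<phi>" and "PP \<alpha>" and "\<forall>j<p. \<alpha> (Yv j) = j"
  shows "PP \<phi> \<and> (\<forall>j<p. \<phi> (Yv j) = j) \<and> (reconf_step (k_col k V E) V)\<^sup>*\<^sup>* (mm \<alpha>) (mm \<phi>)"
  using assms(1)
proof (induction rule: rtranclp_induct)
  case base thus ?case using assms by simp
next
  case (step \<phi> \<psi>)
  from step.hyps(2) obtain w where P1: "PP \<phi>" and P2: "PP \<psi>" and eq: "\<forall>v\<in>VG. v \<noteq> w \<longrightarrow> \<phi> v = \<psi> v"
    unfolding reconf_step_def by blast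
  have Y1: "\<forall>j<p. \<phi> (Yv j) = j" using step.IH by blast
  have Y2: "\<forall>j<p. \<psi> (Yv j) = j" by (rule Y_step[OF P1 P2 eq Y1])
  define w' where "w' = (case w of Orig u \<Rightarrow> u | _ \<Rightarrow> undefined)"
  have "\<forall>v\<in>V. v \<noteq> w' \<longrightarrow> mm \<phi> v = mm \<psi> v"
  proof (intro ballI impI)
    fix v assume vV: "v \<in> V" and ne: "v \<noteq> w'"
    have "Orig v \<in> VG" using vV unfolding Gp_V_def by auto
    moreover have "Orig v \<noteq> w" using ne unfolding w'_def by auto
    ultimately show "mm \<phi> v = mm \<psi> v" using eq by simp
  qed
  hence "reconf_step (k_col k V E) V (mm \<phi>) (mm \<psi>)"
    unfolding reconf_step_def using kcol_m[OF P1 Y1] kcol_m[OF P2 Y2] by blast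
  thus ?case using step.IH P2 Y2 by (meson rtranclp.rtrancl_into_rtrancl)
qed

end

theorem proposition3p3:
  fixes p q k r t :: nat and V :: "'v set" and E :: "'v \<Rightarrow> 'v \<Rightarrow> bool" and f g :: "'v \<Rightarrow> nat"
  assumes "0 < q" and "4 * q \<le> p"
    and "k = p div q" and "r = p - k * q" and "1 \<le> r"
    and "t = (LEAST t. 0 < t \<and> ((t + 1) * q) mod p = r mod p)"
    and "graph V E"
    and "k_col k V E f" and "k_col k V E g"
    and "reconfigures (pq_col p q (Gp_V p t V E) (Gp_E p q t E)) (Gp_V p t V E)
           (Gp_col p q t (gamma q r \<circ> f)) (Gp_col p q t (gamma q r \<circ> g))"
  shows "reconfigures (k_col k V E) V f g"
proof -
  note q0 = assms(1) and pq = assms(2) and kdef = assms(3) and rdef = assms(4) and r1 = assms(5)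
  have "r = p mod q" using rdef kdef by (simp add: minus_div_mult_eq_mod)
  hence rq: "r < q" using q0 by simp
  have rp: "r mod p = r" using rq pq by simp
  have q2: "2 \<le> q" using r1 rq by linarith
  have kq: "k * q \<le> p" using kdef by simp
  have "k * 2 \<le> k * q" using q2 by (rule mult_left_mono) simp
  hence k2: "2 * k \<le> p" using kq by linarith
  define w where "w = p - k - 1"
  have w0: "0 < w" using k2 pq q2 unfolding w_def by linarith
  have "(w + 1) * q = p * (q - 1) + r"
  proof -
    have "w + 1 = p - k" using w0 unfolding w_def by linarith
    hence e1: "(w + 1) * q = p * q - k * q" by (simp add: diff_mult_distrib)
    have e2: "p * (q - 1) + p = p * q" using q0 by (cases q) simp_all
    have e3: "p = k * q + r" using rdef kq by simp
    show ?thesis using e1 e2 e3 by arith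
  qed
  hence "((w + 1) * q) mod p = r mod p" by simp
  hence ex: "0 < w \<and> ((w + 1) * q) mod p = r mod p" using w0 by simp
  have tt: "0 < t \<and> ((t + 1) * q) mod p = r mod p" unfolding assms(6) by (rule LeastI[of "\<lambda>t. 0 < t \<and> ((t + 1) * q) mod p = r mod p" w, OF ex])
  interpret S: Setup p q k r t V E
    by unfold_locales (use q0 pq rq r1 tt rp assms(7) kdef rdef in auto)
  let ?a = "Gp_col p q t (gamma q r \<circ> f)" and ?b = "Gp_col p q t (gamma q r \<circ> g)"
  from assms(10) have Pa: "S.PP ?a" and Pb: "S.PP ?b" and ch: "(reconf_step S.PP S.VG)\<^sup>*\<^sup>* ?a ?b"
    unfolding reconfigures_def by auto
  have Ya: "\<forall>j<p. ?a (Yv j) = j" by simp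
  from S.chain[OF ch Pa Ya] have c2: "(reconf_step (k_col k V E) V)\<^sup>*\<^sup>* (S.mm ?a) (S.mm ?b)"
    and Yb: "\<forall>j<p. ?b (Yv j) = j" by auto
  have ka: "k_col k V E (S.mm ?a)" by (rule S.kcol_m[OF Pa Ya])
  have kb: "k_col k V E (S.mm ?b)" by (rule S.kcol_m[OF Pb Yb])
  have fa: "\<forall>v\<in>V. f v = S.mm ?a v"
    using assms(8) S.hh_gamma unfolding k_col_def by simp
  have gb: "\<forall>v\<in>V. S.mm ?b v = g v"
    using assms(9) S.hh_gamma unfolding k_col_def by simp
  have s1: "reconf_step (k_col k V E) V f (S.mm ?a)"
    unfolding reconf_step_def using assms(8) ka fa by blast
  have s2: "reconf_step (k_col k V E) V (S.mm ?b) g"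
    unfolding reconf_step_def using assms(9) kb gb by blast
  have "(reconf_step (k_col k V E) V)\<^sup>*\<^sup>* f g"
    using s1 c2 s2 by (meson converse_rtranclp_into_rtranclp rtranclp.rtrancl_into_rtrancl)
  thus ?thesis unfolding reconfigures_def using assms(8,9) by simp
qed

end
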